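(* For every directed co-graph $G$, $\mathrm{dpw}(G)=\mathrm{dtw}(G)$.
   Context: Digraphs are finite, without loops or multiple arcs. Operations on vertex-disjoint digraphs $G_1,\ldots,G_k$: the disjoint union $G_1\oplus\cdots\oplus G_k$ (union of vertex and arc sets); the series composition $G_1\otimes\cdots\otimes G_k$ (disjoint union plus all arcs between vertices of $G_i$ and $G_j$ for all $i\neq j$, in both directions); the order composition $G_1\oslash\cdots\oslash G_k$ (disjoint union plus all arcs from vertices of $G_i$ to vertices of $G_j$ for all $i<j$). Directed co-graphs: every single-vertex digraph is a directed co-graph, and if $G_1,\ldots,G_k$ are vertex-disjoint directed co-graphs then their disjoint union, series composition and order composition are directed co-graphs. Directed path-width: a directed path-decomposition of $G=(V,E)$ is a sequence $(X_1,\ldots,X_r)$ of subsets of $V$ with $\bigcup X_i=V$, for each arc $(u,v)$ some $i\le j$ with $u\in X_i,v\in X_j$, and for each vertex the indices of bags containing it forming an interval; width $\max|X_i|-1$; $\mathrm{dpw}(G)$ is the minimum width. Directed tree-width: for $Z\subseteq V$, $S\subseteq V$ is $Z$-normal if no directed walk in $G-Z$ with first and last vertex in $S$ uses a vertex of $G-(Z\cup S)$. A directed tree-decomposition is $(T,\mathcal{X},\mathcal{W})$ with $T=(V_T,E_T)$ an out-tree (rooted tree with arcs directed away from the root; $u\le v$ means a directed path of $\ge0$ arcs from $u$ to $v$), $\mathcal{X}=\{X_e:e\in E_T\}$, $\mathcal{W}=\{W_r:r\in V_T\}$ subsets of $V$, such that $\mathcal{W}$ partitions $V$ into nonempty sets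 and for each $(u,v)\in E_T$ the set $\bigcup\{W_r: v\le r\}$ is $X_{(u,v)}$-normal; width $\max_r|W_r\cup\bigcup_{e\sim r}X_e|-1$ ($e\sim r$: $r$ is an end of $e$); $\mathrm{dtw}(G)$ is the minimum width. *)

theory Defs
  imports Main
begin

type_synonym 'a digraph = "'a set \<times> ('a \<times> 'a) set"

definition verts :: "'a digraph \<Rightarrow> 'a set" where "verts G = fst G"
definition arcs :: "'a digraph \<Rightarrow> ('a \<times> 'a) set" where "arcs G = snd G"

definition is_digraph :: "'a digraph \<Rightarrow> bool" where
  "is_digraph G \<longleftrightarrow> finite (verts G) \<and> arcs G \<subseteq> verts G \<times> verts G
     \<and> (\<forall>v. (v, v) \<notin> arcs G)"

definition pw_disjoint :: "'a digraph list \<Rightarrow> bool" where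
  "pw_disjoint Gs \<longleftrightarrow> (\<forall>i < length Gs. \<forall>j < length Gs. i \<noteq> j \<longrightarrow>
       verts (Gs ! i) \<inter> verts (Gs ! j) = {})"

definition disj_union :: "'a digraph list \<Rightarrow> 'a digraph" where
  "disj_union Gs = ((\<Union>G\<in>set Gs. verts G), (\<Union>G\<in>set Gs. arcs G))"

definition series_comp :: "'a digraph list \<Rightarrow> 'a digraph" where
  "series_comp Gs = ((\<Union>G\<in>set Gs. verts G),
     (\<Union>G\<in>set Gs. arcs G) \<union>
     {(u, v). \<exists>i < length Gs. \<exists>j < length Gs. i \<noteq> j \<and> u \<in> verts (Gs ! i) \<and> v \<in> verts (Gs ! j)})"

definition order_comp :: "'a digraph list \<Rightarrow> 'a digraph" where
  "order_comp Gs = ((\<Union>G\<in>set Gs. verts G),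
     (\<Union>G\<in>set Gs. arcs G) \<union>
     {(u, v). \<exists>i < length Gs. \<exists>j < length Gs. i < j \<and> u \<in> verts (Gs ! i) \<and> v \<in> verts (Gs ! j)})"

inductive dcograph :: "'a digraph \<Rightarrow> bool" where
  single: "dcograph ({v}, {})"
| union: "\<lbrakk>Gs \<noteq> []; \<forall>G\<in>set Gs. dcograph G; pw_disjoint Gs\<rbrakk> \<Longrightarrow> dcograph (disj_union Gs)"
| series: "\<lbrakk>Gs \<noteq> []; \<forall>G\<in>set Gs. dcograph G; pw_disjoint Gs\<rbrakk> \<Longrightarrow> dcograph (series_comp Gs)"
| order: "\<lbrakk>Gs \<noteq> []; \<forall>G\<in>set Gs. dcograph G; pw_disjoint Gs\<rbrakk> \<Longrightarrow> dcograph (order_comp Gs)"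

definition is_dir_path_decomp :: "'a digraph \<Rightarrow> 'a set list \<Rightarrow> bool" where
  "is_dir_path_decomp G Xs \<longleftrightarrow>
     (\<forall>X\<in>set Xs. X \<subseteq> verts G) \<and>
     (\<Union>X\<in>set Xs. X) = verts G \<and>
     (\<forall>(u, v)\<in>arcs G. \<exists>i < length Xs. \<exists>j < length Xs. i \<le> j \<and> u \<in> Xs ! i \<and> v \<in> Xs ! j) \<and>
     (\<forall>v i j k. i \<le> j \<and> j \<le> k \<and> k < length Xs \<and> v \<in> Xs ! i \<and> v \<in> Xs ! k \<longrightarrow> v \<in> Xs ! j)"

definition path_decomp_width :: "'a set list \<Rightarrow> nat" where
  "path_decomp_width Xs = Max (card ` set Xs) - 1"

definition dpw :: "'a digraph \<Rightarrow> nat" where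
  "dpw G = (LEAST w. \<exists>Xs. is_dir_path_decomp G Xs \<and> path_decomp_width Xs = w)"

definition walk_avoiding :: "'a digraph \<Rightarrow> 'a set \<Rightarrow> 'a list \<Rightarrow> bool" where
  "walk_avoiding G Z ws \<longleftrightarrow> ws \<noteq> [] \<and> (\<forall>w\<in>set ws. w \<in> verts G - Z) \<and>
     (\<forall>i. Suc i < length ws \<longrightarrow> (ws ! i, ws ! Suc i) \<in> arcs G)"

definition Z_normal :: "'a digraph \<Rightarrow> 'a set \<Rightarrow> 'a set \<Rightarrow> bool" where
  "Z_normal G Z S \<longleftrightarrow> \<not> (\<exists>ws. walk_avoiding G Z ws \<and> hd ws \<in> S \<and> last ws \<in> S \<and>
       (\<exists>w\<in>set ws. w \<in> verts G - (Z \<union> S)))"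

definition is_out_tree :: "nat set \<Rightarrow> (nat \<times> nat) set \<Rightarrow> bool" where
  "is_out_tree VT ET \<longleftrightarrow> finite VT \<and> VT \<noteq> {} \<and> ET \<subseteq> VT \<times> VT \<and>
     (\<exists>r\<in>VT. (\<forall>u. (u, r) \<notin> ET) \<and>
        (\<forall>v\<in>VT - {r}. \<exists>!u. (u, v) \<in> ET) \<and>
        (\<forall>v\<in>VT. (r, v) \<in> ET\<^sup>*))"

definition is_dir_tree_decomp ::
  "'a digraph \<Rightarrow> nat set \<Rightarrow> (nat \<times> nat) set \<Rightarrow> (nat \<times> nat \<Rightarrow> 'a set) \<Rightarrow> (nat \<Rightarrow> 'a set) \<Rightarrow> bool" where
  "is_dir_tree_decomp G VT ET X W \<longleftrightarrow>
     is_out_tree VT ET \<and>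
     (\<forall>e\<in>ET. X e \<subseteq> verts G) \<and>
     (\<forall>r\<in>VT. W r \<subseteq> verts G \<and> W r \<noteq> {}) \<and>
     (\<forall>r\<in>VT. \<forall>s\<in>VT. r \<noteq> s \<longrightarrow> W r \<inter> W s = {}) \<and>
     (\<Union>r\<in>VT. W r) = verts G \<and>
     (\<forall>(u, v)\<in>ET. Z_normal G (X (u, v)) (\<Union>{W r | r. r \<in> VT \<and> (v, r) \<in> ET\<^sup>*}))"

definition tree_decomp_width ::
  "nat set \<Rightarrow> (nat \<times> nat) set \<Rightarrow> (nat \<times> nat \<Rightarrow> 'a set) \<Rightarrow> (nat \<Rightarrow> 'a set) \<Rightarrow> nat" where
  "tree_decomp_width VT ET X W =
     Max ((\<lambda>r. card (W r \<union> \<Union>{X e | e. e \<in> ET \<and> (fst e = r \<or> snd e = r)})) ` VT) - 1"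

definition dtw :: "'a digraph \<Rightarrow> nat" where
  "dtw G = (LEAST w. \<exists>VT ET X W. is_dir_tree_decomp G VT ET X W \<and> tree_decomp_width VT ET X W = w)"

end

theory Submission
  imports Defs
begin

lemma walk_single: "walk_avoiding G Z [x] \<longleftrightarrow> x \<in> verts G - Z"
  by (auto simp: walk_avoiding_def)

lemma walk_Cons2: "walk_avoiding G Z (x # y # ws) \<longleftrightarrow>
   x \<in> verts G - Z \<and> (x, y) \<in> arcs G \<and> walk_avoiding G Z (y # ws)"
proof
  assume a: "walk_avoiding G Z (x # y # ws)"
  show "x \<in> verts G - Z \<and> (x, y) \<in> arcs G \<and> walk_avoiding G Z (y # ws)"
  proof (intro conjI)
    show "x \<in> verts G - Z" using a by (auto simp: walk_avoiding_def)
    show "(x, y) \<in> arcs G" using a unfolding walk_avoiding_def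
      by (metis Suc_less_eq length_Cons nth_Cons_0 nth_Cons_Suc zero_less_Suc)
    show "walk_avoiding G Z (y # ws)" using a unfolding walk_avoiding_def
      by (metis (no_types, lifting) Suc_less_eq length_Cons list.distinct(1) list.set_intros(2) nth_Cons_Suc)
  qed
next
  assume a: "x \<in> verts G - Z \<and> (x, y) \<in> arcs G \<and> walk_avoiding G Z (y # ws)"
  show "walk_avoiding G Z (x # y # ws)" unfolding walk_avoiding_def
  proof (intro conjI allI impI)
    show "x # y # ws \<noteq> []" by simp
    show "\<forall>w\<in>set (x # y # ws). w \<in> verts G - Z" using a by (auto simp: walk_avoiding_def)
    fix i assume i: "Suc i < length (x # y # ws)"
    show "((x # y # ws) ! i, (x # y # ws) ! Suc i) \<in> arcs G"
    proof (cases i)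
      case 0 then show ?thesis using a by simp
    next
      case (Suc j) then show ?thesis using a i unfolding walk_avoiding_def by auto
    qed
  qed
qed

lemma walk_append:
  "walk_avoiding G Z xs \<Longrightarrow> walk_avoiding G Z (y # ys) \<Longrightarrow> last xs = y \<Longrightarrow>
   walk_avoiding G Z (xs @ ys)"
proof (induction xs)
  case Nil then show ?case by (simp add: walk_avoiding_def)
next
  case (Cons x xs)
  show ?case
  proof (cases xs)
    case Nil then show ?thesis using Cons.prems by simp
  next
    case (Cons x' xs')
    have w: "walk_avoiding G Z xs" using Cons.prems(1) \<open>xs = x' # xs'\<close> walk_Cons2 by metis
    have "walk_avoiding G Z (xs @ ys)" using Cons.IH[OF w Cons.prems(2)] Cons.prems(3) \<open>xs = x' # xs'\<close> by simp
    then show ?thesis using Cons.prems(1) \<open>xs = x' # xs'\<close> by (simp add: walk_Cons2)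
  qed
qed

lemma walk_mono: "walk_avoiding G Z' ws \<Longrightarrow> Z \<subseteq> Z' \<Longrightarrow> walk_avoiding G Z ws"
  by (auto simp: walk_avoiding_def)

lemma walk_sub: "walk_avoiding H Z ws \<Longrightarrow> verts H \<subseteq> verts G \<Longrightarrow> arcs H \<subseteq> arcs G \<Longrightarrow>
   Z' \<inter> verts H \<subseteq> Z \<Longrightarrow> walk_avoiding G Z' ws"
  unfolding walk_avoiding_def by (meson DiffD1 DiffD2 DiffI IntI subset_iff)

lemma walk_closed:
  "walk_avoiding G Z ws \<Longrightarrow> hd ws \<in> S \<Longrightarrow>
   (\<forall>p q. (p, q) \<in> arcs G \<longrightarrow> p \<in> S \<longrightarrow> q \<in> verts G - Z \<longrightarrow> q \<in> S) \<Longrightarrow> set ws \<subseteq> S"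
proof (induction ws)
  case Nil then show ?case by simp
next
  case (Cons x ws)
  show ?case
  proof (cases ws)
    case Nil then show ?thesis using Cons.prems by simp
  next
    case (Cons y ws')
    have w: "walk_avoiding G Z ws" and xy: "(x, y) \<in> arcs G" and y: "y \<in> verts G - Z"
      using Cons.prems(1) \<open>ws = y # ws'\<close> walk_Cons2[of G Z x y ws'] walk_single[of G Z y]
      by (auto simp: walk_avoiding_def)
    have "y \<in> S" using Cons.prems xy y by auto
    then have "set ws \<subseteq> S" using Cons.IH[OF w] Cons.prems(3) \<open>ws = y # ws'\<close> by simp
    then show ?thesis using Cons.prems(2) by simp
  qed
qed

lemma in_ex: "x \<in> A \<Longrightarrow> P x \<Longrightarrow> \<exists>y\<in>A. P y" by blast

definition strong_in :: "'a digraph \<Rightarrow> 'a set \<Rightarrow> 'a set \<Rightarrow> bool" where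
  "strong_in G Z C \<longleftrightarrow> (\<forall>x\<in>C. \<forall>y\<in>C. \<exists>ws. walk_avoiding G Z ws \<and> hd ws = x \<and> last ws = y)"

definition haven :: "'a digraph \<Rightarrow> nat \<Rightarrow> ('a set \<Rightarrow> 'a set) \<Rightarrow> bool" where
  "haven G k \<beta> \<longleftrightarrow>
    (\<forall>Z. Z \<subseteq> verts G \<and> card Z \<le> k \<longrightarrow> \<beta> Z \<noteq> {} \<and> \<beta> Z \<subseteq> verts G - Z \<and> strong_in G Z (\<beta> Z)) \<and>
    (\<forall>Z Z'. Z \<subseteq> verts G \<and> card Z \<le> k \<and> Z' \<subseteq> Z \<longrightarrow> \<beta> Z \<subseteq> \<beta> Z')"

lemma havenD:
  assumes "haven G k \<beta>" "Z \<subseteq> verts G" "card Z \<le> k"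
  shows "\<beta> Z \<noteq> {}" "\<beta> Z \<subseteq> verts G - Z" "strong_in G Z (\<beta> Z)"
  using assms unfolding haven_def by blast+

lemma haven_mono:
  assumes "haven G k \<beta>" "Z \<subseteq> verts G" "card Z \<le> k" "Z' \<subseteq> Z"
  shows "\<beta> Z \<subseteq> \<beta> Z'"
  using assms unfolding haven_def by blast

lemma strong_mono: "strong_in G Z' C \<Longrightarrow> Z \<subseteq> Z' \<Longrightarrow> strong_in G Z C"
  unfolding strong_in_def using walk_mono by metis

lemma out_tree_acyclic:
  assumes t: "is_out_tree VT ET" and v: "v \<in> VT"
  shows "(v, v) \<notin> ET\<^sup>+"
proof -
  obtain r where r: "r \<in> VT" "\<forall>u. (u, r) \<notin> ET" "\<forall>v\<in>VT - {r}. \<exists>!u. (u, v) \<in> ET"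
     "\<forall>v\<in>VT. (r, v) \<in> ET\<^sup>*" and sub: "ET \<subseteq> VT \<times> VT"
    using t unfolding is_out_tree_def by blast
  have "(r, v) \<in> ET\<^sup>*" using r v by blast
  then show ?thesis
  proof (induction rule: rtrancl_induct)
    case base
    show ?case
    proof
      assume "(r, r) \<in> ET\<^sup>+"
      then obtain p where "(p, r) \<in> ET" by (meson tranclD2)
      then show False using r by blast
    qed
  next
    case (step a b)
    show ?case
    proof
      assume "(b, b) \<in> ET\<^sup>+"
      then obtain p where p1: "(b, p) \<in> ET\<^sup>*" and p2: "(p, b) \<in> ET" by (meson tranclD2)
      have "b \<noteq> r" using p2 r by blast
      have "b \<in> VT" using step.hyps(2) sub by blast
      have "p = a" using r(3) \<open>b \<noteq> r\<close> \<open>b \<in> VT\<close> p2 step.hyps(2) by blast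
      then have "(a, a) \<in> ET\<^sup>+" using p1 step.hyps(2)
        by (meson rtrancl_into_trancl2)
      then show False using step.IH by blast
    qed
  qed
qed

lemma haven_bound:
  assumes td: "is_dir_tree_decomp G VT ET X W" and fin: "finite (verts G)" and hv: "haven G k \<beta>"
  shows "\<exists>r\<in>VT. Suc k \<le> card (W r \<union> \<Union>{X e | e. e \<in> ET \<and> (fst e = r \<or> snd e = r)})"
proof (rule ccontr)
  define B where "B r = W r \<union> \<Union>{X e | e. e \<in> ET \<and> (fst e = r \<or> snd e = r)}" for r
  define S where "S v = \<Union>{W r | r. r \<in> VT \<and> (v, r) \<in> ET\<^sup>*}" for v
  assume "\<not> ?thesis"
  then have small: "\<forall>r\<in>VT. card (B r) \<le> k" unfolding B_def by (auto simp: not_le)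
  note tdd = td[unfolded is_dir_tree_decomp_def]
  have tree: "is_out_tree VT ET" using tdd by (elim conjE)
  have Xv: "\<forall>e\<in>ET. X e \<subseteq> verts G" using tdd by (elim conjE)
  have Wv: "\<forall>r\<in>VT. W r \<subseteq> verts G \<and> W r \<noteq> {}" using tdd by (elim conjE)
  have Wd: "\<forall>r\<in>VT. \<forall>s\<in>VT. r \<noteq> s \<longrightarrow> W r \<inter> W s = {}" using tdd by (elim conjE)
  have Wu: "(\<Union>r\<in>VT. W r) = verts G" using tdd by (elim conjE)
  have nor: "\<forall>(u, v)\<in>ET. Z_normal G (X (u, v)) (S v)" unfolding S_def using tdd by (elim conjE)
  have sub: "ET \<subseteq> VT \<times> VT" using tree unfolding is_out_tree_def by (elim conjE)
  have "\<exists>r\<in>VT. (\<forall>u. (u, r) \<notin> ET) \<and> (\<forall>v\<in>VT - {r}. \<exists>!u. (u, v) \<in> ET) \<and> (\<forall>v\<in>VT. (r, v) \<in> ET\<^sup>*)"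
    using tree unfolding is_out_tree_def by (elim conjE)
  then obtain root where root: "root \<in> VT" "\<forall>v\<in>VT. (root, v) \<in> ET\<^sup>*" by (elim bexE conjE) simp
  have Smem: "x \<in> S v \<longleftrightarrow> (\<exists>r\<in>VT. (v, r) \<in> ET\<^sup>* \<and> x \<in> W r)" for x v
    unfolding S_def by auto
  have Bv: "B r \<subseteq> verts G" if "r \<in> VT" for r
    unfolding B_def proof (intro Un_least Union_least)
    show "W r \<subseteq> verts G" using Wv that by blast
    fix Y assume "Y \<in> {X e |e. e \<in> ET \<and> (fst e = r \<or> snd e = r)}"
    then show "Y \<subseteq> verts G" using Xv by auto
  qed
  have Sv: "S v \<subseteq> verts G" for v using Wv unfolding Smem subset_iff by blast
  have sep: "C \<subseteq> S v \<or> C \<inter> S v = {}"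
    if e: "(u, v) \<in> ET" and C: "C \<inter> X (u, v) = {}" "strong_in G (X (u, v)) C" "C \<subseteq> verts G"
    for u v C
  proof (rule ccontr)
    assume "\<not> ?thesis"
    then obtain x y where x: "x \<in> C" "x \<in> S v" and y: "y \<in> C" "y \<notin> S v" by blast
    obtain ws1 where w1: "walk_avoiding G (X (u, v)) ws1" "hd ws1 = x" "last ws1 = y"
      using C(2) x y unfolding strong_in_def by blast
    obtain ws2 where w2: "walk_avoiding G (X (u, v)) ws2" "hd ws2 = y" "last ws2 = x"
      using C(2) x y unfolding strong_in_def by blast
    have ne2: "ws2 \<noteq> []" using w2 walk_avoiding_def by blast
    have ne1: "ws1 \<noteq> []" using w1 walk_avoiding_def by blast
    have "ws2 = y # tl ws2" using ne2 w2(2) by (cases ws2) auto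
    then have wa: "walk_avoiding G (X (u, v)) (ws1 @ tl ws2)"
      using walk_append[of G "X (u,v)" ws1 y "tl ws2"] w1 w2 by simp
    have "x \<noteq> y" using x y by blast
    then have "tl ws2 \<noteq> []" using \<open>ws2 = y # tl ws2\<close> w2(3) by (metis last.simps)
    then have "last (ws1 @ tl ws2) = x" using \<open>ws2 = y # tl ws2\<close> w2(3) by (metis last_ConsR last_appendR)
    moreover have "hd (ws1 @ tl ws2) = x" using ne1 w1 by simp
    moreover have "y \<in> set (ws1 @ tl ws2)" using ne1 w1(3) last_in_set by fastforce
    moreover have "y \<in> verts G - (X (u, v) \<union> S v)" using y C by blast
    ultimately have "\<exists>ws. walk_avoiding G (X (u, v)) ws \<and> hd ws \<in> S v \<and> last ws \<in> S v \<and>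
       (\<exists>w\<in>set ws. w \<in> verts G - (X (u, v) \<union> S v))" using wa x(2) by metis
    then have "\<not> Z_normal G (X (u, v)) (S v)" unfolding Z_normal_def by blast
    then show False using nor e by blast
  qed
  have key: "\<forall>r\<in>VT. card (S r) = n \<longrightarrow> \<beta> (B r) \<subseteq> S r \<longrightarrow> False" for n
  proof (induction n rule: less_induct)
    case (less n)
    show ?case
    proof (intro ballI impI)
      fix r assume r: "r \<in> VT" "card (S r) = n" "\<beta> (B r) \<subseteq> S r"
      have hB: "\<beta> (B r) \<noteq> {}" "\<beta> (B r) \<subseteq> verts G - B r" "strong_in G (B r) (\<beta> (B r))"
        using havenD[OF hv Bv[OF r(1)]] small r(1) by blast+
      obtain x where x: "x \<in> \<beta> (B r)" using hB by blast
      then have "x \<in> S r" using r by blast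
      then obtain s where s: "s \<in> VT" "(r, s) \<in> ET\<^sup>*" "x \<in> W s" unfolding Smem by blast
      have "x \<notin> W r" using x hB unfolding B_def by blast
      then have "s \<noteq> r" using s by blast
      then obtain c where c: "(r, c) \<in> ET" "(c, s) \<in> ET\<^sup>*" using s(2) by (metis converse_rtranclE)
      have cV: "c \<in> VT" using c sub by blast
      have xc: "x \<in> S c" using s c unfolding Smem by blast
      have XB: "X (r, c) \<subseteq> B r" "X (r, c) \<subseteq> B c" using c unfolding B_def by force+
      have finB: "finite (B r)" using Bv[OF r(1)] fin finite_subset by blast
      have cardX: "card (X (r, c)) \<le> k" using card_mono[OF finB XB(1)] small r(1) le_trans by blast
      have Xv': "X (r, c) \<subseteq> verts G" using Xv c by blast
      have hX: "\<beta> (X (r, c)) \<noteq> {}" "\<beta> (X (r, c)) \<subseteq> verts G - X (r, c)"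
          "strong_in G (X (r, c)) (\<beta> (X (r, c)))"
        using havenD[OF hv Xv' cardX] by blast+
      have m1: "\<beta> (B r) \<subseteq> \<beta> (X (r, c))"
        using haven_mono[OF hv Bv[OF r(1)] bspec[OF small r(1)] XB(1)] .
      have m2: "\<beta> (B c) \<subseteq> \<beta> (X (r, c))"
        using haven_mono[OF hv Bv[OF cV] bspec[OF small cV] XB(2)] .
      have "\<beta> (X (r, c)) \<subseteq> S c \<or> \<beta> (X (r, c)) \<inter> S c = {}"
        using sep[OF c(1) _ hX(3)] hX(2) by blast
      then have "\<beta> (X (r, c)) \<subseteq> S c" using x xc m1 by blast
      then have P: "\<beta> (B c) \<subseteq> S c" using m2 by blast
      have "S c \<subseteq> S r" using c unfolding Smem subset_iff by (meson converse_rtrancl_into_rtrancl)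
      moreover have "W r \<subseteq> S r"
      proof
        fix w assume "w \<in> W r"
        then show "w \<in> S r" unfolding Smem using r(1) rtrancl_refl by blast
      qed
      moreover have "(c, r) \<notin> ET\<^sup>*"
      proof
        assume "(c, r) \<in> ET\<^sup>*"
        then have "(r, r) \<in> ET\<^sup>+" using c(1) by (meson rtrancl_into_trancl2)
        then show False using out_tree_acyclic[OF tree r(1)] by blast
      qed
      moreover obtain w where w: "w \<in> W r" using Wv r(1) by blast
      moreover have "w \<notin> S c"
      proof
        assume "w \<in> S c"
        then obtain q where q: "q \<in> VT" "(c, q) \<in> ET\<^sup>*" "w \<in> W q" unfolding Smem by blast
        have "q = r" using Wd q(1,3) r(1) w by blast
        then show False using q(2) \<open>(c, r) \<notin> ET\<^sup>*\<close> by blast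
      qed
      ultimately have "S c \<subset> S r" by blast
      then have "card (S c) < card (S r)" using Sv fin by (meson finite_subset psubset_card_mono)
      then show False using less.IH P cV r(2) by blast
    qed
  qed
  have "S root = verts G" using root Wu unfolding Smem set_eq_iff by blast
  moreover have "\<beta> (B root) \<subseteq> verts G" using havenD[OF hv Bv[OF root(1)]] small root(1) by blast
  ultimately show False using key root(1) by blast
qed

lemma haven_width:
  assumes td: "is_dir_tree_decomp G VT ET X W" and fin: "finite (verts G)" and hv: "haven G k \<beta>"
  shows "k \<le> tree_decomp_width VT ET X W"
proof -
  obtain r where r: "r \<in> VT" "Suc k \<le> card (W r \<union> \<Union>{X e | e. e \<in> ET \<and> (fst e = r \<or> snd e = r)})"
    using haven_bound[OF assms] by blast
  have "finite VT" using td unfolding is_dir_tree_decomp_def is_out_tree_def by blast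
  then have "card (W r \<union> \<Union>{X e | e. e \<in> ET \<and> (fst e = r \<or> snd e = r)}) \<le>
     Max ((\<lambda>r. card (W r \<union> \<Union>{X e | e. e \<in> ET \<and> (fst e = r \<or> snd e = r)})) ` VT)"
    using r(1) by (intro Max_ge) auto
  then show ?thesis using r(2) unfolding tree_decomp_width_def by linarith
qed

lemma path_to_tree:
  assumes pd: "is_dir_path_decomp G Xs" and fin: "finite (verts G)" and ne: "verts G \<noteq> {}"
  shows "\<exists>VT ET X W. is_dir_tree_decomp G VT ET X W \<and> tree_decomp_width VT ET X W \<le> path_decomp_width Xs"
proof -
  define m where "m = length Xs"
  define Wf where "Wf i = {v \<in> Xs ! i. \<forall>j<i. v \<notin> Xs ! j}" for i
  define I where "I = {i. i < m \<and> Wf i \<noteq> {}}"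
  define ET where "ET = {(a, b). a \<in> I \<and> b \<in> I \<and> a < b \<and> (\<forall>c\<in>I. \<not> (a < c \<and> c < b))}"
  define Xf where "Xf e = Xs ! (fst e) \<inter> Xs ! (snd e)" for e :: "nat \<times> nat"
  have bags: "Xs ! i \<subseteq> verts G" if "i < m" for i
    using pd that nth_mem unfolding is_dir_path_decomp_def m_def by blast
  have cover: "\<exists>i<m. v \<in> Xs ! i" if "v \<in> verts G" for v
  proof -
    have "(\<Union>X\<in>set Xs. X) = verts G" using pd unfolding is_dir_path_decomp_def by (elim conjE)
    then have "v \<in> (\<Union>X\<in>set Xs. X)" using that by simp
    then obtain X where "X \<in> set Xs" "v \<in> X" by blast
    then show ?thesis unfolding m_def by (auto simp: in_set_conv_nth)
  qed
  have arcsD: "\<exists>i<m. \<exists>j<m. i \<le> j \<and> u \<in> Xs ! i \<and> v \<in> Xs ! j" if "(u, v) \<in> arcs G" for u v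
  proof -
    have "\<forall>(u, v)\<in>arcs G. \<exists>i < length Xs. \<exists>j < length Xs. i \<le> j \<and> u \<in> Xs ! i \<and> v \<in> Xs ! j"
      using pd unfolding is_dir_path_decomp_def by (elim conjE)
    from bspec[OF this that] show ?thesis unfolding m_def by simp
  qed
  have intv: "v \<in> Xs ! j" if "i \<le> j" "j \<le> k" "k < m" "v \<in> Xs ! i" "v \<in> Xs ! k" for v i j k
  proof -
    have "\<forall>v i j k. i \<le> j \<and> j \<le> k \<and> k < length Xs \<and> v \<in> Xs ! i \<and> v \<in> Xs ! k \<longrightarrow> v \<in> Xs ! j"
      using pd unfolding is_dir_path_decomp_def by (elim conjE)
    from this[rule_format, of i j k v] show ?thesis using that unfolding m_def by blast
  qed
  have first: "\<exists>f\<in>I. v \<in> Wf f" if "v \<in> verts G" for v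
  proof -
    define f where "f = (LEAST i. i < m \<and> v \<in> Xs ! i)"
    have f1: "f < m \<and> v \<in> Xs ! f" unfolding f_def using cover[OF that] by (rule LeastI_ex)
    have f2: "\<forall>j<f. v \<notin> Xs ! j" unfolding f_def using f1 not_less_Least less_trans
      by (metis (no_types, lifting) f_def)
    have "v \<in> Wf f" unfolding Wf_def using f1 f2 by blast
    then show ?thesis unfolding I_def using f1 by blast
  qed
  have finI: "finite I" unfolding I_def by simp
  have pred: "\<exists>u\<in>I. a \<le> u \<and> (u, b) \<in> ET" if "a \<in> I" "b \<in> I" "a < b" for a b
  proof -
    define u where "u = Max {c\<in>I. c < b}"
    have fin': "finite {c\<in>I. c < b}" using finI by simp
    have "a \<in> {c\<in>I. c < b}" using that by simp
    then have u1: "a \<le> u" "u \<in> {c\<in>I. c < b}" unfolding u_def using fin'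
      by (auto intro: Max_ge simp del: Max_in) (metis (no_types, lifting) Max_in empty_iff fin' mem_Collect_eq)+
    have u2: "\<forall>c\<in>I. \<not> (u < c \<and> c < b)" unfolding u_def using fin' Max_ge
      by (metis (mono_tags, lifting) leD mem_Collect_eq)
    show ?thesis using u1 u2 that unfolding ET_def by blast
  qed
  have ET_lt: "a < b" if "(a, b) \<in> ET" for a b using that unfolding ET_def by blast
  have ET_I: "a \<in> I \<and> b \<in> I" if "(a, b) \<in> ET" for a b using that unfolding ET_def by blast
  have reach1: "a \<le> b" if "(a, b) \<in> ET\<^sup>*" for a b
    using that by (induction rule: rtrancl_induct) (auto dest: ET_lt)
  have reach2: "a \<in> I \<Longrightarrow> b \<in> I \<Longrightarrow> a \<le> b \<Longrightarrow> (a, b) \<in> ET\<^sup>*" for a b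
  proof (induction b rule: less_induct)
    case (less b)
    show ?case
    proof (cases "a = b")
      case True then show ?thesis by simp
    next
      case False
      then have "a < b" using less.prems by simp
      then obtain u where u: "u \<in> I" "a \<le> u" "(u, b) \<in> ET" using pred less.prems by blast
      have "(a, u) \<in> ET\<^sup>*" using less.IH[of u] u ET_lt less.prems by blast
      then show ?thesis using u(3) by simp
    qed
  qed
  have IV: "I \<noteq> {}" using first ne by blast
  define root where "root = Min I"
  have root: "root \<in> I" "\<forall>i\<in>I. root \<le> i" unfolding root_def using finI IV by auto
  have tree: "is_out_tree I ET"
    unfolding is_out_tree_def
  proof (intro conjI)
    show "finite I" "I \<noteq> {}" by fact+
    show "ET \<subseteq> I \<times> I" using ET_I by auto
    show "\<exists>r\<in>I. (\<forall>u. (u, r) \<notin> ET) \<and> (\<forall>v\<in>I - {r}. \<exists>!u. (u, v) \<in> ET) \<and> (\<forall>v\<in>I. (r, v) \<in> ET\<^sup>*)"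
    proof (intro bexI[of _ root] conjI ballI allI)
      show "root \<in> I" by fact
      show "(u, root) \<notin> ET" for u using root ET_lt ET_I by fastforce
      show "(root, v) \<in> ET\<^sup>*" if "v \<in> I" for v using reach2 root that by blast
      show "\<exists>!u. (u, v) \<in> ET" if vI: "v \<in> I - {root}" for v
      proof -
        have "root < v" using root vI by force
        then obtain u where u: "(u, v) \<in> ET" using pred[of root v] root vI by blast
        have "u' = u" if "(u', v) \<in> ET" for u'
        proof (rule ccontr)
          assume "u' \<noteq> u"
          then have "u < u' \<or> u' < u" by linarith
          then show False using u that unfolding ET_def by blast
        qed
        then show ?thesis using u by blast
      qed
    qed
  qed
  have Wv: "Wf r \<subseteq> verts G" if "r \<in> I" for r using bags that unfolding Wf_def I_def by blast
  have Xv: "Xf e \<subseteq> verts G" if "e \<in> ET" for e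
    using that bags ET_I unfolding Xf_def I_def by (cases e) force
  have Wd: "Wf r \<inter> Wf s = {}" if "r \<noteq> s" for r s
  proof -
    have "r < s \<or> s < r" using that by linarith
    then show ?thesis unfolding Wf_def by blast
  qed
  have Wu: "(\<Union>r\<in>I. Wf r) = verts G" using Wv first by blast
  have nor: "Z_normal G (Xf (a, b)) (\<Union>{Wf r | r. r \<in> I \<and> (b, r) \<in> ET\<^sup>*})" if ab: "(a, b) \<in> ET" for a b
  proof -
    define S where "S = \<Union>{Wf r | r. r \<in> I \<and> (b, r) \<in> ET\<^sup>*}"
    define Z where "Z = Xf (a, b)"
    have Sm: "\<forall>j<b. x \<notin> Xs ! j" if xS: "x \<in> S" for x
    proof -
      obtain r where r: "r \<in> I" "(b, r) \<in> ET\<^sup>*" "x \<in> Wf r" using xS unfolding S_def by blast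
      have "b \<le> r" using reach1 r(2) by blast
      then show ?thesis using r(3) unfolding Wf_def by auto
    qed
    have bI: "b \<in> I" "a \<in> I" and abl: "a < b" and bm: "b < m" using ab ET_I ET_lt unfolding I_def by auto
    have Om: "x \<notin> Xs ! j" if x: "x \<in> verts G" "x \<notin> Z" "x \<notin> S" and j: "b \<le> j" "j < m" for x j
    proof
      assume xj: "x \<in> Xs ! j"
      obtain f where f: "f \<in> I" "x \<in> Wf f" using first x(1) by blast
      have "\<not> b \<le> f"
      proof
        assume "b \<le> f"
        then have "(b, f) \<in> ET\<^sup>*" using reach2 f(1) bI by blast
        then show False using x(3) f unfolding S_def by blast
      qed
      then have "f \<le> a" using ab f(1) unfolding ET_def by auto
      have fx: "x \<in> Xs ! f" using f(2) unfolding Wf_def by blast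
      have "x \<in> Xs ! a" using intv[OF \<open>f \<le> a\<close> _ j(2) fx xj] abl j(1) by simp
      moreover have "x \<in> Xs ! b" using intv[of f b j, OF _ j(1) j(2) fx xj] \<open>\<not> b \<le> f\<close> by simp
      ultimately show False using x(2) unfolding Z_def Xf_def by simp
    qed
    have clos: "\<forall>p q. (p, q) \<in> arcs G \<longrightarrow> p \<in> S \<longrightarrow> q \<in> verts G - Z \<longrightarrow> q \<in> S"
    proof (intro allI impI)
      fix p q assume pq: "(p, q) \<in> arcs G" "p \<in> S" "q \<in> verts G - Z"
      show "q \<in> S"
      proof (rule ccontr)
        assume qS: "q \<notin> S"
        obtain i j where ij: "i < m" "j < m" "i \<le> j" "p \<in> Xs ! i" "q \<in> Xs ! j" using arcsD[OF pq(1)] by blast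
        have "b \<le> i" using Sm[OF pq(2)] ij(4) by (meson not_le)
        then show False using Om[of q j] pq(3) qS ij by simp
      qed
    qed
    show ?thesis
      unfolding Z_normal_def S_def[symmetric] Z_def[symmetric]
    proof
      assume "\<exists>ws. walk_avoiding G Z ws \<and> hd ws \<in> S \<and> last ws \<in> S \<and> (\<exists>w\<in>set ws. w \<in> verts G - (Z \<union> S))"
      then obtain ws w where ws: "walk_avoiding G Z ws" "hd ws \<in> S" "w \<in> set ws" "w \<notin> S"
        by blast
      have "set ws \<subseteq> S" using walk_closed[OF ws(1) ws(2) clos] .
      then show False using ws by blast
    qed
  qed
  have td: "is_dir_tree_decomp G I ET Xf Wf"
    unfolding is_dir_tree_decomp_def
  proof (intro conjI ballI)
    show "is_out_tree I ET" by fact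
    show "Xf e \<subseteq> verts G" if "e \<in> ET" for e using Xv that .
    show "Wf r \<subseteq> verts G" if "r \<in> I" for r using Wv that .
    show "Wf r \<noteq> {}" if "r \<in> I" for r using that unfolding I_def by blast
    show "r \<noteq> s \<longrightarrow> Wf r \<inter> Wf s = {}" for r s using Wd by blast
    show "(\<Union>r\<in>I. Wf r) = verts G" by fact
    show "case e of (u, v) \<Rightarrow> Z_normal G (Xf (u, v)) (\<Union>{Wf r |r. r \<in> I \<and> (v, r) \<in> ET\<^sup>*})"
      if "e \<in> ET" for e using nor that by (cases e) simp
  qed
  have wid: "tree_decomp_width I ET Xf Wf \<le> path_decomp_width Xs"
  proof -
    have le: "card (Wf r \<union> \<Union>{Xf e | e. e \<in> ET \<and> (fst e = r \<or> snd e = r)}) \<le> Max (card ` set Xs)"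
      if r: "r \<in> I" for r
    proof -
      have rm: "r < m" using r unfolding I_def by blast
      have "Wf r \<union> \<Union>{Xf e | e. e \<in> ET \<and> (fst e = r \<or> snd e = r)} \<subseteq> Xs ! r"
        unfolding Wf_def Xf_def by auto
      then have "card (Wf r \<union> \<Union>{Xf e | e. e \<in> ET \<and> (fst e = r \<or> snd e = r)}) \<le> card (Xs ! r)"
        using bags[OF rm] fin by (meson card_mono finite_subset)
      also have "\<dots> \<le> Max (card ` set Xs)" using rm unfolding m_def by (intro Max_ge) auto
      finally show ?thesis .
    qed
    have "Max ((\<lambda>r. card (Wf r \<union> \<Union>{Xf e | e. e \<in> ET \<and> (fst e = r \<or> snd e = r)})) ` I) \<le> Max (card ` set Xs)"
      using le finI IV by (subst Max_le_iff) auto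
    then show ?thesis unfolding tree_decomp_width_def path_decomp_width_def by linarith
  qed
  show ?thesis using td wid by blast
qed

lemma haven_lt:
  assumes h: "haven G k \<beta>" and f: "finite (verts G)"
  shows "k < card (verts G)"
proof (rule ccontr)
  assume "\<not> k < card (verts G)"
  then have "card (verts G) \<le> k" by simp
  from havenD[OF h order_refl this] show False by blast
qed

lemma haven_part:
  assumes h: "haven H kh \<beta>" and VH: "verts H \<subseteq> verts G" and AH: "arcs H \<subseteq> arcs G"
    and Z: "Z \<subseteq> verts G" and c: "card (Z \<inter> verts H) \<le> kh"
  shows "\<beta> (Z \<inter> verts H) \<noteq> {}" "\<beta> (Z \<inter> verts H) \<subseteq> verts G - Z"
    "strong_in G Z (\<beta> (Z \<inter> verts H))"
proof -
  have Zs: "Z \<inter> verts H \<subseteq> verts H" by blast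
  note D = havenD[OF h Zs c]
  show "\<beta> (Z \<inter> verts H) \<noteq> {}" using D(1) .
  show "\<beta> (Z \<inter> verts H) \<subseteq> verts G - Z" using D(2) VH by blast
  show "strong_in G Z (\<beta> (Z \<inter> verts H))"
    using D(3) unfolding strong_in_def
  proof (intro ballI)
    fix x y assume "x \<in> \<beta> (Z \<inter> verts H)" "y \<in> \<beta> (Z \<inter> verts H)"
      and "\<forall>x\<in>\<beta> (Z \<inter> verts H). \<forall>y\<in>\<beta> (Z \<inter> verts H). \<exists>ws. walk_avoiding H (Z \<inter> verts H) ws \<and> hd ws = x \<and> last ws = y"
    then obtain ws where ws: "walk_avoiding H (Z \<inter> verts H) ws" "hd ws = x" "last ws = y" by blast
    have "walk_avoiding G Z ws" using walk_sub[OF ws(1) VH AH] by blast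
    then show "\<exists>ws. walk_avoiding G Z ws \<and> hd ws = x \<and> last ws = y" using ws by blast
  qed
qed

lemma haven_sub:
  assumes h: "haven H k \<beta>" and VH: "verts H \<subseteq> verts G" and AH: "arcs H \<subseteq> arcs G"
    and f: "finite (verts G)"
  shows "haven G k (\<lambda>Z. \<beta> (Z \<inter> verts H))"
  unfolding haven_def
proof (intro conjI allI impI)
  fix Z assume Z: "Z \<subseteq> verts G \<and> card Z \<le> k"
  have "card (Z \<inter> verts H) \<le> card Z" using Z f by (meson card_mono finite_subset inf_le1)
  then have c: "card (Z \<inter> verts H) \<le> k" using Z by linarith
  note P = haven_part[OF h VH AH conjunct1[OF Z] c]
  show "\<beta> (Z \<inter> verts H) \<noteq> {}" by (rule P(1))
  show "\<beta> (Z \<inter> verts H) \<subseteq> verts G - Z" by (rule P(2))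
  show "strong_in G Z (\<beta> (Z \<inter> verts H))" by (rule P(3))
next
  fix Z Z' assume Z: "Z \<subseteq> verts G \<and> card Z \<le> k \<and> Z' \<subseteq> Z"
  have "card (Z \<inter> verts H) \<le> card Z" using Z f by (meson card_mono finite_subset inf_le1)
  then have c: "card (Z \<inter> verts H) \<le> k" using Z by linarith
  have s1: "Z \<inter> verts H \<subseteq> verts H" by blast
  have s2: "Z' \<inter> verts H \<subseteq> Z \<inter> verts H" using Z by blast
  show "\<beta> (Z \<inter> verts H) \<subseteq> \<beta> (Z' \<inter> verts H)"
    by (rule haven_mono[OF h s1 c s2])
qed

lemma haven_le: assumes h: "haven G k \<beta>" and kk: "k' \<le> k" shows "haven G k' \<beta>"
  unfolding haven_def
proof (intro conjI allI impI)
  fix Z assume Z: "Z \<subseteq> verts G \<and> card Z \<le> k'"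
  then have c: "card Z \<le> k" using kk by linarith
  note D = havenD[OF h conjunct1[OF Z] c]
  show "\<beta> Z \<noteq> {}" by (rule D(1))
  show "\<beta> Z \<subseteq> verts G - Z" by (rule D(2))
  show "strong_in G Z (\<beta> Z)" by (rule D(3))
next
  fix Z Z' assume Z: "Z \<subseteq> verts G \<and> card Z \<le> k' \<and> Z' \<subseteq> Z"
  then have c: "card Z \<le> k" using kk by linarith
  show "\<beta> Z \<subseteq> \<beta> Z'" using haven_mono[OF h conjunct1[OF Z] c] Z by blast
qed

definition good :: "'a digraph \<Rightarrow> bool" where
  "good G \<longleftrightarrow> finite (verts G) \<and> verts G \<noteq> {} \<and> arcs G \<subseteq> verts G \<times> verts G \<and>
    (\<exists>k Xs \<beta>. is_dir_path_decomp G Xs \<and> Xs \<noteq> [] \<and> (\<forall>X\<in>set Xs. card X \<le> Suc k) \<and> haven G k \<beta>)"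

lemma good_single: "good ({v}, {})"
proof -
  let ?G = "({v}, {}) :: 'a digraph"
  have pd: "is_dir_path_decomp ?G [{v}]"
    unfolding is_dir_path_decomp_def verts_def arcs_def by auto
  have hv: "haven ?G 0 (\<lambda>Z. {v})"
    unfolding haven_def
  proof (intro conjI allI impI)
    fix Z :: "'a set" assume Z: "Z \<subseteq> verts ?G \<and> card Z \<le> 0"
    have "Z \<subseteq> {v}" using Z unfolding verts_def by simp
    then have "finite Z" using finite_subset by blast
    then have "Z = {}" using Z by simp
    show "{v} \<noteq> {}" by simp
    show "{v} \<subseteq> verts ?G - Z" using \<open>Z = {}\<close> unfolding verts_def by simp
    show "strong_in ?G Z {v}" unfolding strong_in_def
    proof (intro ballI)
      fix x y assume "x \<in> {v}" "y \<in> {v}"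
      then show "\<exists>ws. walk_avoiding ?G Z ws \<and> hd ws = x \<and> last ws = y"
        using \<open>Z = {}\<close> by (intro exI[of _ "[v]"]) (simp add: walk_single verts_def)
    qed
  next
    fix Z Z' :: "'a set" show "{v} \<subseteq> {v}" by simp
  qed
  have "\<exists>k Xs \<beta>. is_dir_path_decomp ?G Xs \<and> Xs \<noteq> [] \<and> (\<forall>X\<in>set Xs. card X \<le> Suc k) \<and> haven ?G k \<beta>"
    using pd hv by (intro exI[of _ 0] exI[of _ "[{v}]"] exI[of _ "\<lambda>Z. {v}"]) auto
  then show ?thesis unfolding good_def by (auto simp: verts_def arcs_def)
qed

lemma pd_append:
  assumes pd1: "is_dir_path_decomp G1 Xs1" and pd2: "is_dir_path_decomp G2 Xs2"
    and disj: "verts G1 \<inter> verts G2 = {}"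
    and V: "verts G = verts G1 \<union> verts G2"
    and Aup: "arcs G \<subseteq> arcs G1 \<union> arcs G2 \<union> verts G1 \<times> verts G2"
  shows "is_dir_path_decomp G (Xs1 @ Xs2)"
proof -
  let ?l = "length Xs1"
  note d1 = pd1[unfolded is_dir_path_decomp_def] and d2 = pd2[unfolded is_dir_path_decomp_def]
  have b1: "\<forall>X\<in>set Xs1. X \<subseteq> verts G1" using d1 by (elim conjE)
  have b2: "\<forall>X\<in>set Xs2. X \<subseteq> verts G2" using d2 by (elim conjE)
  have u1: "(\<Union>X\<in>set Xs1. X) = verts G1" using d1 by (elim conjE)
  have u2: "(\<Union>X\<in>set Xs2. X) = verts G2" using d2 by (elim conjE)
  have a1: "\<forall>(u, v)\<in>arcs G1. \<exists>i < length Xs1. \<exists>j < length Xs1. i \<le> j \<and> u \<in> Xs1 ! i \<and> v \<in> Xs1 ! j"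
    using d1 by (elim conjE)
  have a2: "\<forall>(u, v)\<in>arcs G2. \<exists>i < length Xs2. \<exists>j < length Xs2. i \<le> j \<and> u \<in> Xs2 ! i \<and> v \<in> Xs2 ! j"
    using d2 by (elim conjE)
  have i1: "\<forall>v i j k. i \<le> j \<and> j \<le> k \<and> k < length Xs1 \<and> v \<in> Xs1 ! i \<and> v \<in> Xs1 ! k \<longrightarrow> v \<in> Xs1 ! j"
    using d1 by (elim conjE)
  have i2: "\<forall>v i j k. i \<le> j \<and> j \<le> k \<and> k < length Xs2 \<and> v \<in> Xs2 ! i \<and> v \<in> Xs2 ! k \<longrightarrow> v \<in> Xs2 ! j"
    using d2 by (elim conjE)
  have c1: "\<exists>i<length Xs1. u \<in> Xs1 ! i" if "u \<in> verts G1" for u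
  proof -
    have "u \<in> (\<Union>X\<in>set Xs1. X)" using u1 that by simp
    then show ?thesis by (auto simp: in_set_conv_nth)
  qed
  have c2: "\<exists>i<length Xs2. u \<in> Xs2 ! i" if "u \<in> verts G2" for u
  proof -
    have "u \<in> (\<Union>X\<in>set Xs2. X)" using u2 that by simp
    then show ?thesis by (auto simp: in_set_conv_nth)
  qed
  show ?thesis unfolding is_dir_path_decomp_def
  proof (intro conjI)
    show "\<forall>X\<in>set (Xs1 @ Xs2). X \<subseteq> verts G" unfolding V using b1 b2 by auto
    show "(\<Union>X\<in>set (Xs1 @ Xs2). X) = verts G" using u1 u2 V by simp
    show "\<forall>(u, v)\<in>arcs G. \<exists>i<length (Xs1 @ Xs2). \<exists>j<length (Xs1 @ Xs2). i \<le> j \<and> u \<in> (Xs1 @ Xs2) ! i \<and> v \<in> (Xs1 @ Xs2) ! j"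
    proof (intro ballI, clarify)
      fix u v assume uv: "(u, v) \<in> arcs G"
      then consider "(u, v) \<in> arcs G1" | "(u, v) \<in> arcs G2" | "u \<in> verts G1" "v \<in> verts G2" using Aup by blast
      then show "\<exists>i<length (Xs1 @ Xs2). \<exists>j<length (Xs1 @ Xs2). i \<le> j \<and> u \<in> (Xs1 @ Xs2) ! i \<and> v \<in> (Xs1 @ Xs2) ! j"
      proof cases
        case 1
        then obtain i j where "i < ?l" "j < ?l" "i \<le> j" "u \<in> Xs1 ! i" "v \<in> Xs1 ! j" using bspec[OF a1 1] by auto
        then show ?thesis by (intro exI[of _ i] conjI exI[of _ j]) (auto simp: nth_append)
      next
        case 2
        then obtain i j where "i < length Xs2" "j < length Xs2" "i \<le> j" "u \<in> Xs2 ! i" "v \<in> Xs2 ! j" using bspec[OF a2 2] by auto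
        then show ?thesis by (intro exI[of _ "?l + i"] conjI exI[of _ "?l + j"]) (auto simp: nth_append)
      next
        case 3
        obtain i where "i < ?l" "u \<in> Xs1 ! i" using c1 3 by blast
        moreover obtain j where "j < length Xs2" "v \<in> Xs2 ! j" using c2 3 by blast
        ultimately show ?thesis by (intro exI[of _ i] conjI exI[of _ "?l + j"]) (auto simp: nth_append)
      qed
    qed
    show "\<forall>v i j k. i \<le> j \<and> j \<le> k \<and> k < length (Xs1 @ Xs2) \<and> v \<in> (Xs1 @ Xs2) ! i \<and> v \<in> (Xs1 @ Xs2) ! k \<longrightarrow> v \<in> (Xs1 @ Xs2) ! j"
    proof (intro allI impI)
      fix v i j k assume a: "i \<le> j \<and> j \<le> k \<and> k < length (Xs1 @ Xs2) \<and> v \<in> (Xs1 @ Xs2) ! i \<and> v \<in> (Xs1 @ Xs2) ! k"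
      show "v \<in> (Xs1 @ Xs2) ! j"
      proof (cases "k < ?l")
        case True
        then have "v \<in> Xs1 ! i" "v \<in> Xs1 ! k" using a by (auto simp: nth_append)
        then have "v \<in> Xs1 ! j" using i1[rule_format, of i j k v] a True by blast
        then show ?thesis using a True by (auto simp: nth_append)
      next
        case False
        show ?thesis
        proof (cases "i < ?l")
          case True
          have "v \<in> Xs1 ! i" using a True by (auto simp: nth_append)
          then have g1: "v \<in> verts G1" using b1 True nth_mem by blast
          have v2: "v \<in> Xs2 ! (k - ?l)" using a False by (auto simp: nth_append)
          have kl: "k - ?l < length Xs2" using a False by (simp add: less_diff_conv2)
          have "v \<in> verts G2" using b2 nth_mem[OF kl] v2 by blast
          then show ?thesis using disj g1 by blast
        next
          case F2: False
          have "v \<in> Xs2 ! (i - ?l)" "v \<in> Xs2 ! (k - ?l)" using a False F2 by (auto simp: nth_append)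
          moreover have "i - ?l \<le> j - ?l" "j - ?l \<le> k - ?l" "k - ?l < length Xs2" using a False F2 by (auto simp: less_diff_conv2)
          ultimately have "v \<in> Xs2 ! (j - ?l)" using i2[rule_format, of "i - ?l" "j - ?l" "k - ?l" v] by blast
          then show ?thesis using a F2 by (auto simp: nth_append)
        qed
      qed
    qed
  qed
qed

lemma goodD:
  assumes "good G"
  obtains k Xs \<beta> where "finite (verts G)" "verts G \<noteq> {}" "arcs G \<subseteq> verts G \<times> verts G" "is_dir_path_decomp G Xs" "Xs \<noteq> []"
    "\<forall>X\<in>set Xs. card X \<le> Suc k" "haven G k \<beta>"
  using assms unfolding good_def by blast

lemma comb_union:
  assumes g1: "good G1" and g2: "good G2" and disj: "verts G1 \<inter> verts G2 = {}"
    and V: "verts G = verts G1 \<union> verts G2"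
    and A1: "arcs G1 \<subseteq> arcs G" and A2: "arcs G2 \<subseteq> arcs G"
    and Aup: "arcs G \<subseteq> arcs G1 \<union> arcs G2 \<union> verts G1 \<times> verts G2"
  shows "good G"
proof -
  obtain k1 Xs1 \<beta>1 where d1: "finite (verts G1)" "verts G1 \<noteq> {}" "arcs G1 \<subseteq> verts G1 \<times> verts G1" "is_dir_path_decomp G1 Xs1" "Xs1 \<noteq> []"
    "\<forall>X\<in>set Xs1. card X \<le> Suc k1" "haven G1 k1 \<beta>1" by (rule goodD[OF g1])
  obtain k2 Xs2 \<beta>2 where d2: "finite (verts G2)" "verts G2 \<noteq> {}" "arcs G2 \<subseteq> verts G2 \<times> verts G2" "is_dir_path_decomp G2 Xs2" "Xs2 \<noteq> []"
    "\<forall>X\<in>set Xs2. card X \<le> Suc k2" "haven G2 k2 \<beta>2" by (rule goodD[OF g2])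
  have fin: "finite (verts G)" using d1(1) d2(1) V by simp
  have ne: "verts G \<noteq> {}" using d1(2) V by simp
  have pd: "is_dir_path_decomp G (Xs1 @ Xs2)" by (rule pd_append[OF d1(4) d2(4) disj V Aup])
  have cards: "\<forall>X\<in>set (Xs1 @ Xs2). card X \<le> Suc (max k1 k2)" using d1(6) d2(6) by fastforce
  have VG1: "verts G1 \<subseteq> verts G" and VG2: "verts G2 \<subseteq> verts G" using V by auto
  obtain \<beta> where hv: "haven G (max k1 k2) \<beta>"
  proof (cases "k1 \<le> k2")
    case True
    then have "max k1 k2 = k2" by simp
    then show ?thesis using haven_sub[OF d2(7) VG2 A2 fin] that by metis
  next
    case False
    then have "max k1 k2 = k1" by simp
    then show ?thesis using haven_sub[OF d1(7) VG1 A1 fin] that by metis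
  qed
  have "\<exists>k Xs \<beta>. is_dir_path_decomp G Xs \<and> Xs \<noteq> [] \<and> (\<forall>X\<in>set Xs. card X \<le> Suc k) \<and> haven G k \<beta>"
    using pd cards hv d1(5) by (intro exI[of _ "max k1 k2"] exI[of _ "Xs1 @ Xs2"] exI[of _ \<beta>]) simp
  moreover have "arcs G \<subseteq> verts G \<times> verts G" using Aup d1(3) d2(3) V by blast
  ultimately show ?thesis unfolding good_def using fin ne by blast
qed

lemma walk2: "x \<in> verts G - Z \<Longrightarrow> y \<in> verts G - Z \<Longrightarrow> (x, y) \<in> arcs G \<Longrightarrow> walk_avoiding G Z [x, y]"
  by (simp add: walk_Cons2 walk_single)

lemma walk3: "x \<in> verts G - Z \<Longrightarrow> y \<in> verts G - Z \<Longrightarrow> z \<in> verts G - Z \<Longrightarrow> (x, z) \<in> arcs G \<Longrightarrow>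
   (z, y) \<in> arcs G \<Longrightarrow> walk_avoiding G Z [x, z, y]"
  by (simp add: walk_Cons2 walk_single)

lemma series_half:
  fixes G G1 G2 :: "'a digraph"
  assumes f1: "finite (verts G1)" and f2: "finite (verts G2)" and disj: "verts G1 \<inter> verts G2 = {}"
    and V: "verts G = verts G1 \<union> verts G2"
    and A1: "arcs G1 \<subseteq> arcs G" and A2: "arcs G2 \<subseteq> arcs G"
    and A12: "verts G1 \<times> verts G2 \<subseteq> arcs G" and A21: "verts G2 \<times> verts G1 \<subseteq> arcs G"
    and Aup: "arcs G \<subseteq> arcs G1 \<union> arcs G2 \<union> verts G1 \<times> verts G2 \<union> verts G2 \<times> verts G1"
    and E2: "arcs G2 \<subseteq> verts G2 \<times> verts G2" and pd1: "is_dir_path_decomp G1 Xs1" and ne1: "Xs1 \<noteq> []" and cards1: "\<forall>X\<in>set Xs1. card X \<le> Suc k1"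
    and h1: "haven G1 k1 \<beta>1" and h2: "haven G2 k2 \<beta>2"
    and le: "k1 + card (verts G2) \<le> k2 + card (verts G1)"
  shows "\<exists>Xs \<beta>. is_dir_path_decomp G Xs \<and> Xs \<noteq> [] \<and> (\<forall>X\<in>set Xs. card X \<le> Suc (k1 + card (verts G2)))
     \<and> haven G (k1 + card (verts G2)) \<beta>"
proof -
  define V1 where "V1 = verts G1"
  define V2 where "V2 = verts G2"
  define k where "k = k1 + card V2"
  define Xs where "Xs = map (\<lambda>X. X \<union> V2) Xs1"
  note d1 = pd1[unfolded is_dir_path_decomp_def]
  have b1: "\<forall>X\<in>set Xs1. X \<subseteq> V1" using d1 unfolding V1_def by (elim conjE)
  have u1: "(\<Union>X\<in>set Xs1. X) = V1" using d1 unfolding V1_def by (elim conjE)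
  have a1: "\<forall>(u, v)\<in>arcs G1. \<exists>i < length Xs1. \<exists>j < length Xs1. i \<le> j \<and> u \<in> Xs1 ! i \<and> v \<in> Xs1 ! j"
    using d1 by (elim conjE)
  have i1: "\<forall>v i j k. i \<le> j \<and> j \<le> k \<and> k < length Xs1 \<and> v \<in> Xs1 ! i \<and> v \<in> Xs1 ! k \<longrightarrow> v \<in> Xs1 ! j"
    using d1 by (elim conjE)
  have c1: "\<exists>i<length Xs1. u \<in> Xs1 ! i" if "u \<in> V1" for u
  proof -
    have "u \<in> (\<Union>X\<in>set Xs1. X)" using u1 that by simp
    then show ?thesis by (auto simp: in_set_conv_nth)
  qed
  have l0: "0 < length Xs1" using ne1 by simp
  have pd: "is_dir_path_decomp G Xs"
    unfolding is_dir_path_decomp_def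
  proof (intro conjI)
    show "\<forall>X\<in>set Xs. X \<subseteq> verts G" unfolding Xs_def V using b1 V1_def V2_def by auto
    show "(\<Union>X\<in>set Xs. X) = verts G"
    proof -
      have "(\<Union>X\<in>set Xs. X) = (\<Union>X\<in>set Xs1. X) \<union> V2" unfolding Xs_def using ne1 by auto
      then show ?thesis using u1 V V1_def V2_def by simp
    qed
    show "\<forall>(u, v)\<in>arcs G. \<exists>i<length Xs. \<exists>j<length Xs. i \<le> j \<and> u \<in> Xs ! i \<and> v \<in> Xs ! j"
    proof (intro ballI, clarify)
      fix u v assume uv: "(u, v) \<in> arcs G"
      then consider "(u, v) \<in> arcs G1" | "(u, v) \<in> arcs G2" | "u \<in> V1" "v \<in> V2" | "u \<in> V2" "v \<in> V1"
        using Aup unfolding V1_def V2_def by blast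
      then show "\<exists>i<length Xs. \<exists>j<length Xs. i \<le> j \<and> u \<in> Xs ! i \<and> v \<in> Xs ! j"
      proof cases
        case 1
        then obtain i j where "i < length Xs1" "j < length Xs1" "i \<le> j" "u \<in> Xs1 ! i" "v \<in> Xs1 ! j"
          using bspec[OF a1 1] by auto
        then show ?thesis unfolding Xs_def by (intro exI[of _ i] conjI exI[of _ j]) auto
      next
        case 2
        then have "u \<in> V2" "v \<in> V2" using E2 unfolding V2_def by auto
        then show ?thesis unfolding Xs_def using l0 by (intro exI[of _ 0] conjI exI[of _ 0]) auto
      next
        case 3
        then obtain i where "i < length Xs1" "u \<in> Xs1 ! i" using c1 by blast
        then show ?thesis unfolding Xs_def using 3 by (intro exI[of _ i] conjI exI[of _ i]) auto
      next
        case 4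
        then obtain i where "i < length Xs1" "v \<in> Xs1 ! i" using c1 by blast
        then show ?thesis unfolding Xs_def using 4 by (intro exI[of _ i] conjI exI[of _ i]) auto
      qed
    qed
    show "\<forall>v i j k. i \<le> j \<and> j \<le> k \<and> k < length Xs \<and> v \<in> Xs ! i \<and> v \<in> Xs ! k \<longrightarrow> v \<in> Xs ! j"
    proof (intro allI impI)
      fix v i j k assume a: "i \<le> j \<and> j \<le> k \<and> k < length Xs \<and> v \<in> Xs ! i \<and> v \<in> Xs ! k"
      then have lens: "i < length Xs1" "j < length Xs1" "k < length Xs1" unfolding Xs_def by auto
      show "v \<in> Xs ! j"
      proof (cases "v \<in> V2")
        case True then show ?thesis unfolding Xs_def using lens by simp
      next
        case False
        then have "v \<in> Xs1 ! i" "v \<in> Xs1 ! k" using a lens unfolding Xs_def by auto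
        then have "v \<in> Xs1 ! j" using i1[rule_format, of i j k v] a lens by blast
        then show ?thesis unfolding Xs_def using lens by simp
      qed
    qed
  qed
  have cards: "\<forall>X\<in>set Xs. card X \<le> Suc k"
  proof
    fix Y assume "Y \<in> set Xs"
    then obtain X where X: "X \<in> set Xs1" "Y = X \<union> V2" unfolding Xs_def by auto
    have "card Y \<le> card X + card V2" unfolding X(2) by (rule card_Un_le)
    then show "card Y \<le> Suc k" using cards1 X(1) unfolding k_def by fastforce
  qed
  have f1': "finite V1" and f2': "finite V2" using f1 f2 V1_def V2_def by auto
  have finV: "finite (verts G)" using f1 f2 V by simp
  have VG1: "verts G1 \<subseteq> verts G" and VG2: "verts G2 \<subseteq> verts G" using V by auto
  have k1lt: "k1 < card V1" using haven_lt[OF h1 f1] V1_def by simp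
  have le': "k1 + card V2 \<le> k2 + card V1" using le V1_def V2_def by simp
  have VV: "verts G = V1 \<union> V2" using V V1_def V2_def by simp
  have dj: "V1 \<inter> V2 = {}" using disj V1_def V2_def by simp
  have cardB1: "card (Z \<inter> verts G1) \<le> k1" if Z: "Z \<subseteq> verts G" "card Z \<le> k" "V2 \<subseteq> Z" for Z
  proof -
    have "Z = (Z \<inter> V1) \<union> V2" using Z VV by blast
    moreover have "(Z \<inter> V1) \<inter> V2 = {}" using dj by blast
    ultimately have "card Z = card (Z \<inter> V1) + card V2" using f1' f2' by (metis card_Un_disjoint finite_Int)
    then show ?thesis using Z(2) unfolding k_def V1_def by linarith
  qed
  have cardB2: "card (Z \<inter> verts G2) \<le> k2" if Z: "Z \<subseteq> verts G" "card Z \<le> k" "V1 \<subseteq> Z" for Z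
  proof -
    have "Z = V1 \<union> (Z \<inter> V2)" using Z VV by blast
    moreover have "V1 \<inter> (Z \<inter> V2) = {}" using dj by blast
    ultimately have "card Z = card V1 + card (Z \<inter> V2)" using f1' f2' by (metis card_Un_disjoint finite_Int)
    then show ?thesis using Z(2) le' unfolding k_def V2_def by linarith
  qed
  have notboth: "\<not> (V1 \<subseteq> Z \<and> V2 \<subseteq> Z)" if Z: "Z \<subseteq> verts G" "card Z \<le> k" for Z
  proof
    assume "V1 \<subseteq> Z \<and> V2 \<subseteq> Z"
    then have "Z = V1 \<union> V2" using Z VV by blast
    then have "card Z = card V1 + card V2" using f1' f2' dj by (simp add: card_Un_disjoint)
    then show False using Z(2) k1lt unfolding k_def by linarith
  qed
  define \<beta> where "\<beta> Z = (if \<not> V1 \<subseteq> Z \<and> \<not> V2 \<subseteq> Z then verts G - Z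
      else if \<not> V1 \<subseteq> Z then \<beta>1 (Z \<inter> verts G1) else \<beta>2 (Z \<inter> verts G2))" for Z
  have \<beta>A: "\<beta> Z = verts G - Z" if "\<not> V1 \<subseteq> Z" "\<not> V2 \<subseteq> Z" for Z using that unfolding \<beta>_def by simp
  have \<beta>B1: "\<beta> Z = \<beta>1 (Z \<inter> verts G1)" if "\<not> V1 \<subseteq> Z" "V2 \<subseteq> Z" for Z using that unfolding \<beta>_def by simp
  have \<beta>B2: "\<beta> Z = \<beta>2 (Z \<inter> verts G2)" if "V1 \<subseteq> Z" for Z using that unfolding \<beta>_def by simp
  have A12': "(x, y) \<in> arcs G" if "x \<in> V1" "y \<in> V2" for x y using A12 that V1_def V2_def by blast
  have A21': "(x, y) \<in> arcs G" if "x \<in> V2" "y \<in> V1" for x y using A21 that V1_def V2_def by blast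
  have hv: "haven G k \<beta>"
    unfolding haven_def
  proof (intro conjI allI impI)
    fix Z assume Zk: "Z \<subseteq> verts G \<and> card Z \<le> k"
    then have Z: "Z \<subseteq> verts G" and Zc: "card Z \<le> k" by auto
    consider (A) "\<not> V1 \<subseteq> Z" "\<not> V2 \<subseteq> Z" | (B1) "\<not> V1 \<subseteq> Z" "V2 \<subseteq> Z" | (B2) "V1 \<subseteq> Z" by blast
    then have "\<beta> Z \<noteq> {} \<and> \<beta> Z \<subseteq> verts G - Z \<and> strong_in G Z (\<beta> Z)"
    proof cases
      case A
      obtain a where a: "a \<in> V1" "a \<notin> Z" using A by blast
      obtain b where b: "b \<in> V2" "b \<notin> Z" using A by blast
      have aG: "a \<in> verts G - Z" and bG: "b \<in> verts G - Z" using a b VV by auto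
      have "strong_in G Z (verts G - Z)"
        unfolding strong_in_def
      proof (intro ballI)
        fix x y assume x: "x \<in> verts G - Z" and y: "y \<in> verts G - Z"
        have "\<exists>ws. walk_avoiding G Z ws \<and> hd ws = x \<and> last ws = y"
        proof (cases "x \<in> V1")
          case True
          show ?thesis
          proof (cases "y \<in> V1")
            case True
            have "walk_avoiding G Z [x, b, y]" using walk3[OF x y bG] A12' A21' \<open>x \<in> V1\<close> True b by blast
            then show ?thesis by force
          next
            case False
            then have "y \<in> V2" using y VV by blast
            have "walk_avoiding G Z [x, y]" using walk2[OF x y] A12' \<open>x \<in> V1\<close> \<open>y \<in> V2\<close> by blast
            then show ?thesis by force
          qed
        next
          case False
          then have xV2: "x \<in> V2" using x VV by blast
          show ?thesis
          proof (cases "y \<in> V1")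
            case True
            have "walk_avoiding G Z [x, y]" using walk2[OF x y] A21' xV2 True by blast
            then show ?thesis by force
          next
            case False
            then have "y \<in> V2" using y VV by blast
            have "walk_avoiding G Z [x, a, y]" using walk3[OF x y aG] A12' A21' xV2 \<open>y \<in> V2\<close> a by blast
            then show ?thesis by force
          qed
        qed
        then show "\<exists>ws. walk_avoiding G Z ws \<and> hd ws = x \<and> last ws = y" .
      qed
      then show ?thesis using \<beta>A[OF A] aG by auto
    next
      case B1
      note P = haven_part[OF h1 VG1 A1 Z cardB1[OF Z Zc B1(2)]]
      show ?thesis using P \<beta>B1[OF B1] by simp
    next
      case B2
      have "\<not> V2 \<subseteq> Z" using notboth[OF Z Zc] B2 by blast
      note P = haven_part[OF h2 VG2 A2 Z cardB2[OF Z Zc B2]]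
      show ?thesis using P \<beta>B2[OF B2] by simp
    qed
    then show "\<beta> Z \<noteq> {}" "\<beta> Z \<subseteq> verts G - Z" "strong_in G Z (\<beta> Z)" by auto
  next
    fix Z Z' assume Zk: "Z \<subseteq> verts G \<and> card Z \<le> k \<and> Z' \<subseteq> Z"
    then have Z: "Z \<subseteq> verts G" and Zc: "card Z \<le> k" and ZZ: "Z' \<subseteq> Z" by auto
    have Z': "Z' \<subseteq> verts G" using Z ZZ by blast
    have fZ: "finite Z" using Z finV finite_subset by blast
    have Z'c: "card Z' \<le> k" using card_mono[OF fZ ZZ] Zc by linarith
    show "\<beta> Z \<subseteq> \<beta> Z'"
    proof (cases "\<not> V1 \<subseteq> Z' \<and> \<not> V2 \<subseteq> Z'")
      case True
      then have "\<beta> Z' = verts G - Z'" using \<beta>A by blast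
      moreover have "\<beta> Z \<subseteq> verts G - Z"
      proof -
        consider (A) "\<not> V1 \<subseteq> Z" "\<not> V2 \<subseteq> Z" | (B1) "\<not> V1 \<subseteq> Z" "V2 \<subseteq> Z" | (B2) "V1 \<subseteq> Z" by blast
        then show ?thesis
        proof cases
          case A then show ?thesis using \<beta>A by simp
        next
          case B1
          show ?thesis using haven_part(2)[OF h1 VG1 A1 Z cardB1[OF Z Zc B1(2)]] \<beta>B1[OF B1] by simp
        next
          case B2
          show ?thesis using haven_part(2)[OF h2 VG2 A2 Z cardB2[OF Z Zc B2]] \<beta>B2[OF B2] by simp
        qed
      qed
      ultimately show ?thesis using ZZ by blast
    next
      case False
      then consider (B1) "\<not> V1 \<subseteq> Z'" "V2 \<subseteq> Z'" | (B2) "V1 \<subseteq> Z'" by blast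
      then show ?thesis
      proof cases
        case B1
        have "V2 \<subseteq> Z" using B1 ZZ by blast
        moreover have "\<not> V1 \<subseteq> Z" using notboth[OF Z Zc] \<open>V2 \<subseteq> Z\<close> by blast
        ultimately have e: "\<beta> Z = \<beta>1 (Z \<inter> verts G1)" using \<beta>B1 by blast
        have s1: "Z \<inter> verts G1 \<subseteq> verts G1" by blast
        have s2: "Z' \<inter> verts G1 \<subseteq> Z \<inter> verts G1" using ZZ by blast
        have "\<beta>1 (Z \<inter> verts G1) \<subseteq> \<beta>1 (Z' \<inter> verts G1)"
          by (rule haven_mono[OF h1 s1 cardB1[OF Z Zc \<open>V2 \<subseteq> Z\<close>] s2])
        then show ?thesis using e \<beta>B1[OF B1] by simp
      next
        case B2
        have "V1 \<subseteq> Z" using B2 ZZ by blast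
        then have e: "\<beta> Z = \<beta>2 (Z \<inter> verts G2)" using \<beta>B2 by blast
        have s1: "Z \<inter> verts G2 \<subseteq> verts G2" by blast
        have s2: "Z' \<inter> verts G2 \<subseteq> Z \<inter> verts G2" using ZZ by blast
        have "\<beta>2 (Z \<inter> verts G2) \<subseteq> \<beta>2 (Z' \<inter> verts G2)"
          by (rule haven_mono[OF h2 s1 cardB2[OF Z Zc \<open>V1 \<subseteq> Z\<close>] s2])
        then show ?thesis using e \<beta>B2[OF B2] by simp
      qed
    qed
  qed
  show ?thesis using pd cards hv ne1 unfolding k_def V2_def Xs_def
    by (intro exI[of _ "map (\<lambda>X. X \<union> verts G2) Xs1"] exI[of _ \<beta>]) simp
qed

lemma comb_series:
  assumes g1: "good G1" and g2: "good G2" and disj: "verts G1 \<inter> verts G2 = {}"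
    and V: "verts G = verts G1 \<union> verts G2"
    and A1: "arcs G1 \<subseteq> arcs G" and A2: "arcs G2 \<subseteq> arcs G"
    and A12: "verts G1 \<times> verts G2 \<subseteq> arcs G" and A21: "verts G2 \<times> verts G1 \<subseteq> arcs G"
    and Aup: "arcs G \<subseteq> arcs G1 \<union> arcs G2 \<union> verts G1 \<times> verts G2 \<union> verts G2 \<times> verts G1"
  shows "good G"
proof -
  obtain k1 Xs1 \<beta>1 where d1: "finite (verts G1)" "verts G1 \<noteq> {}" "arcs G1 \<subseteq> verts G1 \<times> verts G1" "is_dir_path_decomp G1 Xs1" "Xs1 \<noteq> []"
    "\<forall>X\<in>set Xs1. card X \<le> Suc k1" "haven G1 k1 \<beta>1" by (rule goodD[OF g1])
  obtain k2 Xs2 \<beta>2 where d2: "finite (verts G2)" "verts G2 \<noteq> {}" "arcs G2 \<subseteq> verts G2 \<times> verts G2" "is_dir_path_decomp G2 Xs2" "Xs2 \<noteq> []"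
    "\<forall>X\<in>set Xs2. card X \<le> Suc k2" "haven G2 k2 \<beta>2" by (rule goodD[OF g2])
  have fin: "finite (verts G)" using d1(1) d2(1) V by simp
  have ne: "verts G \<noteq> {}" using d1(2) V by simp
  have AV: "arcs G \<subseteq> verts G \<times> verts G" using Aup d1(3) d2(3) V by blast
  have "\<exists>k Xs \<beta>. is_dir_path_decomp G Xs \<and> Xs \<noteq> [] \<and> (\<forall>X\<in>set Xs. card X \<le> Suc k) \<and> haven G k \<beta>"
  proof (cases "k1 + card (verts G2) \<le> k2 + card (verts G1)")
    case True
    from series_half[OF d1(1) d2(1) disj V A1 A2 A12 A21 Aup d2(3) d1(4) d1(5) d1(6) d1(7) d2(7) True]
    show ?thesis by blast
  next
    case False
    then have le: "k2 + card (verts G1) \<le> k1 + card (verts G2)" by simp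
    have disj': "verts G2 \<inter> verts G1 = {}" using disj by blast
    have V': "verts G = verts G2 \<union> verts G1" using V by blast
    have Aup': "arcs G \<subseteq> arcs G2 \<union> arcs G1 \<union> verts G2 \<times> verts G1 \<union> verts G1 \<times> verts G2" using Aup by blast
    from series_half[OF d2(1) d1(1) disj' V' A2 A1 A21 A12 Aup' d1(3) d2(4) d2(5) d2(6) d2(7) d1(7) le]
    show ?thesis by blast
  qed
  then show ?thesis unfolding good_def using fin ne AV by blast
qed

lemma pw_tail: "pw_disjoint (G # Gs) \<Longrightarrow> pw_disjoint Gs"
  unfolding pw_disjoint_def
proof (intro allI impI)
  fix i j assume H: "\<forall>i<length (G # Gs). \<forall>j<length (G # Gs). i \<noteq> j \<longrightarrow> verts ((G # Gs) ! i) \<inter> verts ((G # Gs) ! j) = {}"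
    and ij: "i < length Gs" "j < length Gs" "i \<noteq> j"
  have "verts ((G # Gs) ! Suc i) \<inter> verts ((G # Gs) ! Suc j) = {}"
    using H[rule_format, of "Suc i" "Suc j"] ij by simp
  then show "verts (Gs ! i) \<inter> verts (Gs ! j) = {}" by simp
qed

lemma pw_head: "pw_disjoint (G # Gs) \<Longrightarrow> verts G \<inter> (\<Union>H\<in>set Gs. verts H) = {}"
proof -
  assume H: "pw_disjoint (G # Gs)"
  have "verts G \<inter> verts H = {}" if "H \<in> set Gs" for H
  proof -
    from \<open>H \<in> set Gs\<close> obtain j where j0: "j < length Gs" "Gs ! j = H" unfolding in_set_conv_nth by blast
    then have j: "j < length Gs" "H = Gs ! j" by simp_all
    have "verts ((G # Gs) ! 0) \<inter> verts ((G # Gs) ! Suc j) = {}"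
      using H[unfolded pw_disjoint_def, rule_format, of 0 "Suc j"] j by simp
    then show ?thesis using j by simp
  qed
  then show ?thesis by blast
qed

lemma in_Union_nth: "(v \<in> (\<Union>H\<in>set Gs. verts H)) = (\<exists>j<length Gs. v \<in> verts (Gs ! j))"
proof
  assume "v \<in> (\<Union>H\<in>set Gs. verts H)"
  then obtain H where H: "H \<in> set Gs" "v \<in> verts H" by blast
  from H(1) obtain j where "j < length Gs" "Gs ! j = H" unfolding in_set_conv_nth by blast
  then show "\<exists>j<length Gs. v \<in> verts (Gs ! j)" using H(2) by blast
next
  assume "\<exists>j<length Gs. v \<in> verts (Gs ! j)"
  then obtain j where "j < length Gs" "v \<in> verts (Gs ! j)" by blast
  then show "v \<in> (\<Union>H\<in>set Gs. verts H)" using nth_mem by blast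
qed

definition cross_o :: "'a digraph list \<Rightarrow> ('a \<times> 'a) set" where
  "cross_o Gs = {(u, v). \<exists>i < length Gs. \<exists>j < length Gs. i < j \<and> u \<in> verts (Gs ! i) \<and> v \<in> verts (Gs ! j)}"
definition cross_s :: "'a digraph list \<Rightarrow> ('a \<times> 'a) set" where
  "cross_s Gs = {(u, v). \<exists>i < length Gs. \<exists>j < length Gs. i \<noteq> j \<and> u \<in> verts (Gs ! i) \<and> v \<in> verts (Gs ! j)}"

lemma cross_o_I: "i < length Gs \<Longrightarrow> j < length Gs \<Longrightarrow> i < j \<Longrightarrow> u \<in> verts (Gs ! i) \<Longrightarrow> v \<in> verts (Gs ! j) \<Longrightarrow> (u, v) \<in> cross_o Gs"
  by (simp only: cross_o_def list.set(2) UN_insert) blast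
lemma cross_s_I: "i < length Gs \<Longrightarrow> j < length Gs \<Longrightarrow> i \<noteq> j \<Longrightarrow> u \<in> verts (Gs ! i) \<Longrightarrow> v \<in> verts (Gs ! j) \<Longrightarrow> (u, v) \<in> cross_s Gs"
  by (simp only: cross_s_def list.set(2) UN_insert) blast

lemma cross_o_Cons: "cross_o (G # Gs) = verts G \<times> (\<Union>H\<in>set Gs. verts H) \<union> cross_o Gs"
proof (intro set_eqI iffI)
  fix p assume "p \<in> cross_o (G # Gs)"
  then obtain u v i j where p: "p = (u, v)" "i < Suc (length Gs)" "j < Suc (length Gs)" "i < j"
    "u \<in> verts ((G # Gs) ! i)" "v \<in> verts ((G # Gs) ! j)" unfolding cross_o_def by auto
  obtain j' where j': "j = Suc j'" using p(4) by (cases j) auto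
  show "p \<in> verts G \<times> (\<Union>H\<in>set Gs. verts H) \<union> cross_o Gs"
  proof (cases i)
    case 0
    have "v \<in> (\<Union>H\<in>set Gs. verts H)" using p j' in_Union_nth[of v Gs] by auto
    then show ?thesis using p 0 by simp
  next
    case (Suc i')
    then show ?thesis using p j' unfolding cross_o_def by auto
  qed
next
  fix p assume "p \<in> verts G \<times> (\<Union>H\<in>set Gs. verts H) \<union> cross_o Gs"
  then consider (a) "p \<in> verts G \<times> (\<Union>H\<in>set Gs. verts H)" | (b) "p \<in> cross_o Gs" by blast
  then show "p \<in> cross_o (G # Gs)"
  proof cases
    case a
    then obtain u v where uv: "p = (u, v)" "u \<in> verts G" "v \<in> (\<Union>H\<in>set Gs. verts H)" by blast
    then obtain j where "j < length Gs" "v \<in> verts (Gs ! j)" using in_Union_nth[of v Gs] by blast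
    note this uv
    then show ?thesis using cross_o_I[of 0 "G # Gs" "Suc j"] by simp
  next
    case b
    then obtain u v i j where "p = (u, v)" "i < length Gs" "j < length Gs" "i < j" "u \<in> verts (Gs ! i)" "v \<in> verts (Gs ! j)"
      unfolding cross_o_def by auto
    then show ?thesis using cross_o_I[of "Suc i" "G # Gs" "Suc j"] by simp
  qed
qed

lemma cross_s_Cons: "cross_s (G # Gs) = verts G \<times> (\<Union>H\<in>set Gs. verts H) \<union> (\<Union>H\<in>set Gs. verts H) \<times> verts G \<union> cross_s Gs"
proof (intro set_eqI iffI)
  fix p assume "p \<in> cross_s (G # Gs)"
  then obtain u v i j where p: "p = (u, v)" "i < Suc (length Gs)" "j < Suc (length Gs)" "i \<noteq> j"
    "u \<in> verts ((G # Gs) ! i)" "v \<in> verts ((G # Gs) ! j)" unfolding cross_s_def by auto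
  show "p \<in> verts G \<times> (\<Union>H\<in>set Gs. verts H) \<union> (\<Union>H\<in>set Gs. verts H) \<times> verts G \<union> cross_s Gs"
  proof (cases i)
    case 0
    then obtain j' where j': "j = Suc j'" using p(4) by (cases j) auto
    have "v \<in> (\<Union>H\<in>set Gs. verts H)" using p j' in_Union_nth[of v Gs] by auto
    then show ?thesis using p 0 by simp
  next
    case (Suc i')
    show ?thesis
    proof (cases j)
      case 0
      have "u \<in> (\<Union>H\<in>set Gs. verts H)" using p Suc in_Union_nth[of u Gs] by auto
      then show ?thesis using p 0 by simp
    next
      case (Suc j')
      then show ?thesis using p \<open>i = Suc i'\<close> unfolding cross_s_def by auto
    qed
  qed
next
  fix p assume "p \<in> verts G \<times> (\<Union>H\<in>set Gs. verts H) \<union> (\<Union>H\<in>set Gs. verts H) \<times> verts G \<union> cross_s Gs"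
  then consider (a) "p \<in> verts G \<times> (\<Union>H\<in>set Gs. verts H)" | (c) "p \<in> (\<Union>H\<in>set Gs. verts H) \<times> verts G"
    | (b) "p \<in> cross_s Gs" by blast
  then show "p \<in> cross_s (G # Gs)"
  proof cases
    case a
    then obtain u v where uv: "p = (u, v)" "u \<in> verts G" "v \<in> (\<Union>H\<in>set Gs. verts H)" by blast
    then obtain j where "j < length Gs" "v \<in> verts (Gs ! j)" using in_Union_nth[of v Gs] by blast
    note this uv
    then show ?thesis using cross_s_I[of 0 "G # Gs" "Suc j"] by simp
  next
    case c
    then obtain u v where uv: "p = (u, v)" "v \<in> verts G" "u \<in> (\<Union>H\<in>set Gs. verts H)" by blast
    then obtain j where "j < length Gs" "u \<in> verts (Gs ! j)" using in_Union_nth[of u Gs] by blast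
    note this uv
    then show ?thesis using cross_s_I[of "Suc j" "G # Gs" 0] by simp
  next
    case b
    then obtain u v i j where "p = (u, v)" "i < length Gs" "j < length Gs" "i \<noteq> j" "u \<in> verts (Gs ! i)" "v \<in> verts (Gs ! j)"
      unfolding cross_s_def by auto
    then show ?thesis using cross_s_I[of "Suc i" "G # Gs" "Suc j"] by simp
  qed
qed

lemma verts_du: "verts (disj_union Gs) = (\<Union>H\<in>set Gs. verts H)" by (simp add: disj_union_def verts_def)
lemma arcs_du: "arcs (disj_union Gs) = (\<Union>H\<in>set Gs. arcs H)" by (simp add: disj_union_def arcs_def)
lemma verts_oc: "verts (order_comp Gs) = (\<Union>H\<in>set Gs. verts H)" by (simp add: order_comp_def verts_def)
lemma arcs_oc: "arcs (order_comp Gs) = (\<Union>H\<in>set Gs. arcs H) \<union> cross_o Gs"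
  by (simp add: order_comp_def arcs_def cross_o_def)
lemma verts_sc: "verts (series_comp Gs) = (\<Union>H\<in>set Gs. verts H)" by (simp add: series_comp_def verts_def)
lemma arcs_sc: "arcs (series_comp Gs) = (\<Union>H\<in>set Gs. arcs H) \<union> cross_s Gs"
  by (simp add: series_comp_def arcs_def cross_s_def)

lemma cross_o_single: "cross_o [G] = {}" by (auto simp: cross_o_def)
lemma cross_s_single: "cross_s [G] = {}" by (auto simp: cross_s_def)

lemma ao: "arcs (order_comp (G # Gs)) = arcs G \<union> arcs (order_comp Gs) \<union> verts G \<times> verts (order_comp Gs)"
  by (simp add: arcs_oc verts_oc cross_o_Cons Un_ac)
lemma as: "arcs (series_comp (G # Gs)) = arcs G \<union> arcs (series_comp Gs) \<union> verts G \<times> verts (series_comp Gs) \<union> verts (series_comp Gs) \<times> verts G"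
  by (simp add: arcs_sc verts_sc cross_s_Cons Un_ac)

lemma good_eq: "good G \<Longrightarrow> verts H = verts G \<Longrightarrow> arcs H = arcs G \<Longrightarrow> good H"
proof -
  assume "good G" "verts H = verts G" "arcs H = arcs G"
  then have "H = G" unfolding verts_def arcs_def by (simp add: prod_eq_iff)
  then show "good H" using \<open>good G\<close> by simp
qed

lemma good_du: "Gs \<noteq> [] \<Longrightarrow> \<forall>G\<in>set Gs. good G \<Longrightarrow> pw_disjoint Gs \<Longrightarrow> good (disj_union Gs)"
proof (induction Gs)
  case Nil then show ?case by simp
next
  case (Cons G Gs)
  show ?case
  proof (cases "Gs = []")
    case True
    then show ?thesis using Cons.prems good_eq[of G] by (simp add: verts_du arcs_du)
  next
    case False
    have IH: "good (disj_union Gs)" using Cons.IH[OF False _ pw_tail[OF Cons.prems(3)]] Cons.prems(2) by simp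
    have g1: "good G" using Cons.prems(2) by simp
    have dj: "verts G \<inter> verts (disj_union Gs) = {}" using pw_head[OF Cons.prems(3)] by (simp add: verts_du)
    have V: "verts (disj_union (G # Gs)) = verts G \<union> verts (disj_union Gs)" by (simp add: verts_du)
    have A1: "arcs G \<subseteq> arcs (disj_union (G # Gs))" by (simp only: arcs_du list.set(2) UN_insert) blast
    have A2: "arcs (disj_union Gs) \<subseteq> arcs (disj_union (G # Gs))" by (simp only: arcs_du list.set(2) UN_insert) blast
    have Aup: "arcs (disj_union (G # Gs)) \<subseteq> arcs G \<union> arcs (disj_union Gs) \<union> verts G \<times> verts (disj_union Gs)"
      by (simp only: verts_du arcs_du list.set(2) UN_insert) blast
    show ?thesis by (rule comb_union[OF g1 IH dj V A1 A2 Aup])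
  qed
qed

lemma good_oc: "Gs \<noteq> [] \<Longrightarrow> \<forall>G\<in>set Gs. good G \<Longrightarrow> pw_disjoint Gs \<Longrightarrow> good (order_comp Gs)"
proof (induction Gs)
  case Nil then show ?case by simp
next
  case (Cons G Gs)
  show ?case
  proof (cases "Gs = []")
    case True
    then show ?thesis using Cons.prems good_eq[of G] by (simp add: verts_oc arcs_oc cross_o_single)
  next
    case False
    have IH: "good (order_comp Gs)" using Cons.IH[OF False _ pw_tail[OF Cons.prems(3)]] Cons.prems(2) by simp
    have g1: "good G" using Cons.prems(2) by simp
    have dj: "verts G \<inter> verts (order_comp Gs) = {}" using pw_head[OF Cons.prems(3)] by (simp add: verts_oc)
    have V: "verts (order_comp (G # Gs)) = verts G \<union> verts (order_comp Gs)" by (simp add: verts_oc)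
    have A1: "arcs G \<subseteq> arcs (order_comp (G # Gs))" unfolding ao by blast
    have A2: "arcs (order_comp Gs) \<subseteq> arcs (order_comp (G # Gs))" unfolding ao by blast
    have Aup: "arcs (order_comp (G # Gs)) \<subseteq> arcs G \<union> arcs (order_comp Gs) \<union> verts G \<times> verts (order_comp Gs)"
      unfolding ao by blast
    show ?thesis by (rule comb_union[OF g1 IH dj V A1 A2 Aup])
  qed
qed

lemma good_sc: "Gs \<noteq> [] \<Longrightarrow> \<forall>G\<in>set Gs. good G \<Longrightarrow> pw_disjoint Gs \<Longrightarrow> good (series_comp Gs)"
proof (induction Gs)
  case Nil then show ?case by simp
next
  case (Cons G Gs)
  show ?case
  proof (cases "Gs = []")
    case True
    then show ?thesis using Cons.prems good_eq[of G] by (simp add: verts_sc arcs_sc cross_s_single)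
  next
    case False
    have IH: "good (series_comp Gs)" using Cons.IH[OF False _ pw_tail[OF Cons.prems(3)]] Cons.prems(2) by simp
    have g1: "good G" using Cons.prems(2) by simp
    have dj: "verts G \<inter> verts (series_comp Gs) = {}" using pw_head[OF Cons.prems(3)] by (simp add: verts_sc)
    have V: "verts (series_comp (G # Gs)) = verts G \<union> verts (series_comp Gs)" by (simp add: verts_sc)
    have A1: "arcs G \<subseteq> arcs (series_comp (G # Gs))" unfolding as by blast
    have A2: "arcs (series_comp Gs) \<subseteq> arcs (series_comp (G # Gs))" unfolding as by blast
    have A12: "verts G \<times> verts (series_comp Gs) \<subseteq> arcs (series_comp (G # Gs))" unfolding as by blast
    have A21: "verts (series_comp Gs) \<times> verts G \<subseteq> arcs (series_comp (G # Gs))" unfolding as by blast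
    have Aup: "arcs (series_comp (G # Gs)) \<subseteq> arcs G \<union> arcs (series_comp Gs) \<union> verts G \<times> verts (series_comp Gs) \<union> verts (series_comp Gs) \<times> verts G"
      unfolding as by blast
    show ?thesis by (rule comb_series[OF g1 IH dj V A1 A2 A12 A21 Aup])
  qed
qed

lemma cograph_good: "dcograph G \<Longrightarrow> good G"
proof (induction rule: dcograph.induct)
  case (single v) then show ?case by (rule good_single)
next
  case (union Gs) then show ?case using good_du by blast
next
  case (series Gs) then show ?case using good_sc by blast
next
  case (order Gs) then show ?case using good_oc by blast
qed


theorem theorem5p3:
  fixes G :: "'a digraph"
  assumes "dcograph G"
  shows "dpw G = dtw G"
proof -
  have g: "good G" using cograph_good[OF assms] .
  obtain k Xs \<beta> where d: "finite (verts G)" "verts G \<noteq> {}" "arcs G \<subseteq> verts G \<times> verts G"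
    "is_dir_path_decomp G Xs" "Xs \<noteq> []" "\<forall>X\<in>set Xs. card X \<le> Suc k" "haven G k \<beta>"
    by (rule goodD[OF g])
  have wk: "path_decomp_width Xs \<le> k"
  proof -
    have "Max (card ` set Xs) \<le> Suc k" using d(5) d(6) by (subst Max_le_iff) auto
    then show ?thesis unfolding path_decomp_width_def by linarith
  qed
  have ex1: "\<exists>w Ys. is_dir_path_decomp G Ys \<and> path_decomp_width Ys = w" using d(4) by blast
  have dpw_le: "dpw G \<le> path_decomp_width Xs" unfolding dpw_def
    by (rule Least_le) (use d(4) in blast)
  have "\<exists>Ys. is_dir_path_decomp G Ys \<and> path_decomp_width Ys = dpw G"
    unfolding dpw_def using ex1 by (rule LeastI_ex)
  then obtain Ys where Ys: "is_dir_path_decomp G Ys" "path_decomp_width Ys = dpw G" by blast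
  obtain VT ET X W where T: "is_dir_tree_decomp G VT ET X W" "tree_decomp_width VT ET X W \<le> path_decomp_width Ys"
    using path_to_tree[OF Ys(1) d(1) d(2)] by blast
  have dtw_le: "dtw G \<le> tree_decomp_width VT ET X W" unfolding dtw_def
    by (rule Least_le) (use T(1) in blast)
  have ex2: "\<exists>w VT ET X W. is_dir_tree_decomp G VT ET X W \<and> tree_decomp_width VT ET X W = w" using T(1) by blast
  have "\<exists>VT ET X W. is_dir_tree_decomp G VT ET X W \<and> tree_decomp_width VT ET X W = dtw G"
    unfolding dtw_def using ex2 by (rule LeastI_ex)
  then obtain VT' ET' X' W' where T': "is_dir_tree_decomp G VT' ET' X' W'" "tree_decomp_width VT' ET' X' W' = dtw G"
    by blast
  have "k \<le> dtw G" using haven_width[OF T'(1) d(1) d(7)] T'(2) by simp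
  then show ?thesis using wk dpw_le dtw_le T(2) Ys(2) by linarith
qed

end
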